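(* Assume the distribution $\mathcal D_2(\lambda)$ defined in the context. For any $\Pi\subseteq\mathbf X_1$ and any $Y\in\mathbf X_1$, \[|H(X_b\mid\Pi)-H(X_a\mid\Pi)|\le\lambda,\qquad |H(Y\mid\Pi,X_b)-H(Y\mid\Pi,X_a)|\le3\lambda.\]
   Context: Entropies use the natural logarithm; $k$ is a fixed positive integer. Scores: for a DAG (identified with its set of families $\langle Y,\Pi\rangle$, $|\Pi|\le k$) the score is $-\sum H(Y\mid\Pi)$ over its families; Markov-equivalent DAGs form equivalence classes (ECs) with a common score. Construction. $\mathcal D_1$ is a distribution over a finite set $\mathbf X_1$ of at least $k$ discrete variables, containing a variable $X_a$, such that for some $\alpha,\beta>0$: (I) among DAGs over $\mathbf X_1$ with in-degree $\le k$ there is a unique optimal EC, with score gap at least $\beta$ to the next-best EC; (II) $X_a$ has no children in any structure of the optimal EC; (III) $H(X_a\mid\mathbf X_1\setminus\{X_a\})=\alpha$. Let $\mathbf X=\mathbf X_1\cup\{X_b\}$, $d=|\mathbf X|$. For $\lambda\in(0,\min(\alpha,\beta/(3d)))$, $\mathcal D_2(\lambda)$ is a distribution on $\mathbf X$ with marginal $\mathcal D_1$ on $\mathbf X_1$ such that: (IV) there is a hidden Bernoulli variable $C$ independent of $\mathbf X_1$ with $P[X_b=X_a\mid C=1]=1$ and $X_b$ independent of $\mathbf X_1$ given $C=0$; (V) $\max(H(X_b\mid X_a),H(X_a\mid X_b))=\lambda$. *)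

theory Defs
  imports "HOL-Probability.Probability"
begin

text \<open>A distribution over variables indexed by type 'v with values in 'x is a pmf on
  assignments 'v => 'x.  proj S w restricts an assignment to the variables in S.\<close>

definition proj :: "'v set \<Rightarrow> ('v \<Rightarrow> 'x) \<Rightarrow> ('v \<Rightarrow> 'x)" where
  "proj S w = (\<lambda>v. if v \<in> S then w v else undefined)"

definition ent :: "('v \<Rightarrow> 'x) pmf \<Rightarrow> 'v set \<Rightarrow> real" where
  "ent p S = (\<Sum>y \<in> proj S ` set_pmf p.
      - measure_pmf.prob p {w. proj S w = y} * ln (measure_pmf.prob p {w. proj S w = y}))"

definition cent :: "('v \<Rightarrow> 'x) pmf \<Rightarrow> 'v set \<Rightarrow> 'v set \<Rightarrow> real" where
  "cent p Y Par = ent p (Y \<union> Par) - ent p Par"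

definition dag_edges :: "('v \<Rightarrow> 'v set) \<Rightarrow> 'v set \<Rightarrow> ('v \<times> 'v) set" where
  "dag_edges par V = {(u, v). v \<in> V \<and> u \<in> par v}"

definition is_dag :: "nat \<Rightarrow> 'v set \<Rightarrow> ('v \<Rightarrow> 'v set) \<Rightarrow> bool" where
  "is_dag k V par \<longleftrightarrow>
     (\<forall>v \<in> V. par v \<subseteq> V - {v} \<and> card (par v) \<le> k) \<and>
     (\<forall>v. v \<notin> V \<longrightarrow> par v = {}) \<and>
     acyclic (dag_edges par V)"

definition dag_adj :: "('v \<Rightarrow> 'v set) \<Rightarrow> 'v \<Rightarrow> 'v \<Rightarrow> bool" where
  "dag_adj par u v \<longleftrightarrow> u \<in> par v \<or> v \<in> par u"

definition descendants :: "('v \<Rightarrow> 'v set) \<Rightarrow> 'v set \<Rightarrow> 'v \<Rightarrow> 'v set" where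
  "descendants par V v = {w. (v, w) \<in> (dag_edges par V)\<^sup>*}"

definition is_path :: "('v \<Rightarrow> 'v set) \<Rightarrow> 'v set \<Rightarrow> 'v list \<Rightarrow> bool" where
  "is_path par V xs \<longleftrightarrow> length xs \<ge> 2 \<and> distinct xs \<and> set xs \<subseteq> V \<and>
     (\<forall>i. Suc i < length xs \<longrightarrow> dag_adj par (xs ! i) (xs ! Suc i))"

definition collider_at :: "('v \<Rightarrow> 'v set) \<Rightarrow> 'v list \<Rightarrow> nat \<Rightarrow> bool" where
  "collider_at par xs i \<longleftrightarrow> xs ! (i - 1) \<in> par (xs ! i) \<and> xs ! Suc i \<in> par (xs ! i)"

definition active_path :: "('v \<Rightarrow> 'v set) \<Rightarrow> 'v set \<Rightarrow> 'v set \<Rightarrow> 'v list \<Rightarrow> bool" where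
  "active_path par V Z xs \<longleftrightarrow> is_path par V xs \<and>
     (\<forall>i. 0 < i \<and> Suc i < length xs \<longrightarrow>
        (collider_at par xs i \<longrightarrow> descendants par V (xs ! i) \<inter> Z \<noteq> {}) \<and>
        (\<not> collider_at par xs i \<longrightarrow> xs ! i \<notin> Z))"

definition d_separated :: "('v \<Rightarrow> 'v set) \<Rightarrow> 'v set \<Rightarrow> 'v \<Rightarrow> 'v \<Rightarrow> 'v set \<Rightarrow> bool" where
  "d_separated par V x y Z \<longleftrightarrow>
     \<not> (\<exists>xs. active_path par V Z xs \<and> hd xs = x \<and> last xs = y)"

definition markov_equiv :: "'v set \<Rightarrow> ('v \<Rightarrow> 'v set) \<Rightarrow> ('v \<Rightarrow> 'v set) \<Rightarrow> bool" where
  "markov_equiv V G G' \<longleftrightarrow>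
     (\<forall>x y Z. x \<in> V \<longrightarrow> y \<in> V \<longrightarrow> x \<noteq> y \<longrightarrow> Z \<subseteq> V - {x, y} \<longrightarrow>
        (d_separated G V x y Z \<longleftrightarrow> d_separated G' V x y Z))"

definition score :: "('v \<Rightarrow> 'x) pmf \<Rightarrow> 'v set \<Rightarrow> ('v \<Rightarrow> 'v set) \<Rightarrow> real" where
  "score p V G = - (\<Sum>v \<in> V. cent p {v} (G v))"

end

theory Submission
  imports Defs
begin

definition Hs :: "('a \<Rightarrow> real) \<Rightarrow> 'a set \<Rightarrow> ('a \<Rightarrow> 'b) \<Rightarrow> real" where
  "Hs m W f = - (\<Sum>w\<in>W. m w * ln (sum m {v\<in>W. f v = f w}))"

lemma Hs_pos:
  fixes m :: "'a \<Rightarrow> real"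
  assumes "finite W" "\<And>w. w \<in> W \<Longrightarrow> m w > 0" "w \<in> W"
  shows "sum m {v\<in>W. f v = f w} > 0"
proof -
  have "m w \<le> sum m {v\<in>W. f v = f w}"
  proof -
    have "sum m {w} \<le> sum m {v\<in>W. f v = f w}"
      by (rule sum_mono2) (use assms in \<open>auto intro: less_imp_le\<close>)
    then show ?thesis by simp
  qed
  moreover have "m w > 0" using assms by auto
  ultimately show ?thesis by linarith
qed

lemma Hs_group:
  assumes "finite W"
  shows "Hs m W f = (\<Sum>y\<in>f`W. - sum m {w\<in>W. f w = y} * ln (sum m {w\<in>W. f w = y}))"
proof -
  have "(\<Sum>w\<in>W. m w * ln (sum m {v\<in>W. f v = f w}))
      = (\<Sum>y\<in>f`W. \<Sum>w\<in>{w\<in>W. f w = y}. m w * ln (sum m {v\<in>W. f v = f w}))"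
    by (rule sum.group[symmetric]) (use assms in auto)
  also have "\<dots> = (\<Sum>y\<in>f`W. \<Sum>w\<in>{w\<in>W. f w = y}. m w * ln (sum m {v\<in>W. f v = y}))"
    by (intro sum.cong refl) auto
  also have "\<dots> = (\<Sum>y\<in>f`W. sum m {w\<in>W. f w = y} * ln (sum m {w\<in>W. f w = y}))"
    by (simp add: sum_distrib_right)
  finally show ?thesis unfolding Hs_def by (simp add: sum_negf)
qed

lemma ent_Hs:
  assumes "finite (set_pmf p)"
  shows "ent p S = Hs (pmf p) (set_pmf p) (proj S)"
proof -
  have pr: "measure_pmf.prob p {w. proj S w = y} = sum (pmf p) {w\<in>set_pmf p. proj S w = y}" for y
  proof -
    have "measure_pmf.prob p {w. proj S w = y} = measure_pmf.prob p ({w. proj S w = y} \<inter> set_pmf p)"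
      by (simp add: measure_Int_set_pmf)
    also have "\<dots> = sum (pmf p) ({w. proj S w = y} \<inter> set_pmf p)"
      using assms by (simp add: measure_measure_pmf_finite)
    also have "({w. proj S w = y} \<inter> set_pmf p) = {w\<in>set_pmf p. proj S w = y}" by auto
    finally show ?thesis .
  qed
  show ?thesis unfolding ent_def Hs_group[OF assms] pr by simp
qed

lemma Hs_cong:
  assumes "\<And>v w. v \<in> W \<Longrightarrow> w \<in> W \<Longrightarrow> (f v = f w) = (g v = g w)"
  shows "Hs m W f = Hs m W g"
  unfolding Hs_def
proof -
  have "\<And>w. w \<in> W \<Longrightarrow> {v\<in>W. f v = f w} = {v\<in>W. g v = g w}" using assms by auto
  then show "- (\<Sum>w\<in>W. m w * ln (sum m {v\<in>W. f v = f w})) = - (\<Sum>w\<in>W. m w * ln (sum m {v\<in>W. g v = g w}))"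
    by (metis (no_types, lifting) sum.cong)
qed

lemma Hs_mono:
  assumes "finite W" "\<And>w. w \<in> W \<Longrightarrow> m w > 0"
  shows "Hs m W f \<le> Hs m W (\<lambda>w. (f w, g w))"
  unfolding Hs_def
proof -
  have "m w * ln (sum m {v\<in>W. (f v, g v) = (f w, g w)}) \<le> m w * ln (sum m {v\<in>W. f v = f w})"
    if w: "w \<in> W" for w
  proof -
    have p1: "sum m {v\<in>W. (f v, g v) = (f w, g w)} > 0"
      using Hs_pos[OF assms w, where f="\<lambda>w. (f w, g w)"] by simp
    have "sum m {v\<in>W. (f v, g v) = (f w, g w)} \<le> sum m {v\<in>W. f v = f w}"
      by (rule sum_mono2) (use assms in \<open>auto intro: less_imp_le\<close>)
    then have "ln (sum m {v\<in>W. (f v, g v) = (f w, g w)}) \<le> ln (sum m {v\<in>W. f v = f w})"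
      using p1 by simp
    then show ?thesis using assms(2)[OF w] by (simp add: mult_left_mono)
  qed
  then show "- (\<Sum>w\<in>W. m w * ln (sum m {v\<in>W. f v = f w})) \<le> - (\<Sum>w\<in>W. m w * ln (sum m {v\<in>W. (f v, g v) = (f w, g w)}))"
    by (simp add: sum_mono)
qed

lemma Hs_submod:
  fixes m :: "'a \<Rightarrow> real"
  assumes fin: "finite W" and pos: "\<And>w. w \<in> W \<Longrightarrow> m w > 0" and one: "sum m W = 1"
  shows "Hs m W (\<lambda>w. (f w, g w, h w)) + Hs m W h \<le> Hs m W (\<lambda>w. (f w, h w)) + Hs m W (\<lambda>w. (g w, h w))"
proof -
  define t where "t w = (f w, g w, h w)" for w
  define Pt where "Pt w = sum m {v\<in>W. t v = t w}" for w
  define Ph where "Ph w = sum m {v\<in>W. h v = h w}" for w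
  define Pfh where "Pfh w = sum m {v\<in>W. (f v, h v) = (f w, h w)}" for w
  define Pgh where "Pgh w = sum m {v\<in>W. (g v, h v) = (g w, h w)}" for w
  define Qh where "Qh z = sum m {w\<in>W. h w = z}" for z
  define Qfh where "Qfh x z = sum m {w\<in>W. h w = z \<and> f w = x}" for x z
  define Qgh where "Qgh y z = sum m {w\<in>W. h w = z \<and> g w = y}" for y z
  define Qt where "Qt u = sum m {w\<in>W. t w = u}" for u
  define psi where "psi u = Qfh (fst u) (snd (snd u)) * Qgh (fst (snd u)) (snd (snd u)) / Qh (snd (snd u))" for u
  have m0: "\<And>w. w \<in> W \<Longrightarrow> m w \<ge> 0" using pos less_imp_le by blast
  have pPt: "Pt w > 0" if "w \<in> W" for w unfolding Pt_def by (rule Hs_pos[OF fin pos that])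
  have pPh: "Ph w > 0" if "w \<in> W" for w unfolding Ph_def by (rule Hs_pos[OF fin pos that])
  have pPfh: "Pfh w > 0" if "w \<in> W" for w unfolding Pfh_def
    using Hs_pos[OF fin pos that, where f="\<lambda>w. (f w, h w)"] by simp
  have pPgh: "Pgh w > 0" if "w \<in> W" for w unfolding Pgh_def
    using Hs_pos[OF fin pos that, where f="\<lambda>w. (g w, h w)"] by simp
  have Qnn: "Qh z \<ge> 0" "Qfh x z \<ge> 0" "Qgh y z \<ge> 0" for x y z
    unfolding Qh_def Qfh_def Qgh_def by (auto intro!: sum_nonneg m0)
  have psinn: "psi u \<ge> 0" for u unfolding psi_def using Qnn by auto
  have key: "(\<Sum>w\<in>W. m w * (Pfh w * Pgh w / (Pt w * Ph w))) \<le> 1"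
  proof -
    have "(\<Sum>w\<in>W. m w * (Pfh w * Pgh w / (Pt w * Ph w))) = (\<Sum>w\<in>W. m w * psi (t w) / Qt (t w))"
    proof (intro sum.cong refl)
      fix w assume "w \<in> W"
      have "Pfh w = Qfh (f w) (h w)" unfolding Pfh_def Qfh_def by (intro arg_cong[where f="sum m"]) auto
      moreover have "Pgh w = Qgh (g w) (h w)" unfolding Pgh_def Qgh_def by (intro arg_cong[where f="sum m"]) auto
      moreover have "Ph w = Qh (h w)" unfolding Ph_def Qh_def by simp
      moreover have "Pt w = Qt (t w)" unfolding Pt_def Qt_def by simp
      ultimately show "m w * (Pfh w * Pgh w / (Pt w * Ph w)) = m w * psi (t w) / Qt (t w)"
        unfolding psi_def t_def by simp
    qed
    also have "\<dots> = (\<Sum>u\<in>t`W. \<Sum>w\<in>{w\<in>W. t w = u}. m w * psi (t w) / Qt (t w))"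
      by (rule sum.group[symmetric]) (use fin in auto)
    also have "\<dots> = (\<Sum>u\<in>t`W. \<Sum>w\<in>{w\<in>W. t w = u}. m w * (psi u / Qt u))"
      by (intro sum.cong refl) auto
    also have "\<dots> = (\<Sum>u\<in>t`W. (\<Sum>w\<in>{w\<in>W. t w = u}. m w) * (psi u / Qt u))"
      by (intro sum.cong refl) (rule sum_distrib_right[symmetric])
    also have "\<dots> = (\<Sum>u\<in>t`W. Qt u * (psi u / Qt u))"
      unfolding Qt_def by (rule refl)
    also have "\<dots> = (\<Sum>u\<in>t`W. psi u)"
    proof (intro sum.cong refl)
      fix u assume "u \<in> t`W"
      then obtain w where "w \<in> W" "u = t w" by auto
      then have "Qt u > 0" using pPt unfolding Pt_def Qt_def by simp
      then show "Qt u * (psi u / Qt u) = psi u" by simp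
    qed
    also have "\<dots> \<le> (\<Sum>u\<in>f`W \<times> (g`W \<times> h`W). psi u)"
      by (rule sum_mono2) (use fin psinn in \<open>auto simp: t_def\<close>)
    also have "\<dots> = (\<Sum>x\<in>f`W. \<Sum>y\<in>g`W. \<Sum>z\<in>h`W. psi (x, y, z))"
      by (simp add: sum.cartesian_product)
    also have "\<dots> = (\<Sum>x\<in>f`W. \<Sum>z\<in>h`W. \<Sum>y\<in>g`W. psi (x, y, z))"
      by (rule sum.cong[OF refl], rule sum.swap)
    also have "\<dots> = (\<Sum>z\<in>h`W. \<Sum>x\<in>f`W. \<Sum>y\<in>g`W. psi (x, y, z))"
      by (rule sum.swap)
    also have "\<dots> = (\<Sum>z\<in>h`W. Qh z)"
    proof (intro sum.cong refl)
      fix z assume z: "z \<in> h`W"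
      then obtain w where "w \<in> W" "z = h w" by auto
      then have qz: "Qh z > 0" using pPh unfolding Ph_def Qh_def by simp
      have sf: "(\<Sum>x\<in>f`W. Qfh x z) = Qh z"
        unfolding Qfh_def Qh_def
        using sum.group[of "{w\<in>W. h w = z}" "f`W" f m] fin by (simp add: image_mono)
      have sg: "(\<Sum>y\<in>g`W. Qgh y z) = Qh z"
        unfolding Qgh_def Qh_def
        using sum.group[of "{w\<in>W. h w = z}" "g`W" g m] fin by (simp add: image_mono)
      have "(\<Sum>x\<in>f`W. \<Sum>y\<in>g`W. psi (x, y, z)) = (\<Sum>x\<in>f`W. Qfh x z) * (\<Sum>y\<in>g`W. Qgh y z) / Qh z"
        unfolding psi_def by (simp add: sum_product sum_divide_distrib)
      also have "\<dots> = Qh z" using qz sf sg by simp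
      finally show "(\<Sum>x\<in>f`W. \<Sum>y\<in>g`W. psi (x, y, z)) = Qh z" .
    qed
    also have "\<dots> = sum m W"
      unfolding Qh_def using sum.group[of W "h`W" h m] fin by simp
    finally show ?thesis using one by simp
  qed
  have "Hs m W (\<lambda>w. (f w, g w, h w)) + Hs m W h - Hs m W (\<lambda>w. (f w, h w)) - Hs m W (\<lambda>w. (g w, h w))
      = (\<Sum>w\<in>W. m w * ln (Pfh w * Pgh w / (Pt w * Ph w)))"
  proof -
    have "ln (Pfh w * Pgh w / (Pt w * Ph w)) = ln (Pfh w) + ln (Pgh w) - ln (Pt w) - ln (Ph w)"
      if w: "w \<in> W" for w
      using pPt[OF w] pPh[OF w] pPfh[OF w] pPgh[OF w] by (simp add: ln_mult ln_div)
    note that = this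
    have "(\<Sum>w\<in>W. m w * ln (Pfh w * Pgh w / (Pt w * Ph w)))
        = (\<Sum>w\<in>W. m w * ln (Pfh w)) + (\<Sum>w\<in>W. m w * ln (Pgh w)) - (\<Sum>w\<in>W. m w * ln (Pt w)) - (\<Sum>w\<in>W. m w * ln (Ph w))"
    proof -
      have "(\<Sum>w\<in>W. m w * ln (Pfh w * Pgh w / (Pt w * Ph w)))
          = (\<Sum>w\<in>W. m w * ln (Pfh w) + m w * ln (Pgh w) - m w * ln (Pt w) - m w * ln (Ph w))"
      proof (intro sum.cong refl)
        fix w assume w: "w \<in> W"
        show "m w * ln (Pfh w * Pgh w / (Pt w * Ph w)) = m w * ln (Pfh w) + m w * ln (Pgh w) - m w * ln (Pt w) - m w * ln (Ph w)"
          unfolding that[OF w] by (simp add: algebra_simps)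
      qed
      then show ?thesis by (simp only: sum.distrib sum_subtractf)
    qed
    then show ?thesis unfolding Hs_def Pfh_def Pgh_def Pt_def Ph_def t_def by simp
  qed
  also have "\<dots> \<le> (\<Sum>w\<in>W. m w * (Pfh w * Pgh w / (Pt w * Ph w) - 1))"
  proof (rule sum_mono)
    fix w assume w: "w \<in> W"
    have "ln (Pfh w * Pgh w / (Pt w * Ph w)) \<le> Pfh w * Pgh w / (Pt w * Ph w) - 1"
      by (rule ln_le_minus_one) (use pPt pPh pPfh pPgh w in simp)
    then show "m w * ln (Pfh w * Pgh w / (Pt w * Ph w)) \<le> m w * (Pfh w * Pgh w / (Pt w * Ph w) - 1)"
      using m0[OF w] by (rule mult_left_mono)
  qed
  also have "\<dots> = (\<Sum>w\<in>W. m w * (Pfh w * Pgh w / (Pt w * Ph w))) - 1"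
    using one by (simp add: right_diff_distrib sum_subtractf)
  also have "\<dots> \<le> 0" using key by simp
  finally show ?thesis by simp
qed

lemma proj_eq: "proj S v = proj S w \<longleftrightarrow> (\<forall>x\<in>S. v x = w x)"
  unfolding proj_def fun_eq_iff by auto

lemma ent_sub:
  assumes fin: "finite (set_pmf p)"
  shows "ent p (A \<union> B \<union> C) + ent p C \<le> ent p (A \<union> C) + ent p (B \<union> C)"
proof -
  let ?m = "pmf p" and ?W = "set_pmf p"
  have pos: "\<And>w. w \<in> ?W \<Longrightarrow> ?m w > 0" by (simp add: pmf_positive)
  have one: "sum ?m ?W = 1" by (rule sum_pmf_eq_1[OF fin subset_refl])
  have e1: "ent p (A \<union> B \<union> C) = Hs ?m ?W (\<lambda>w. (proj A w, proj B w, proj C w))"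
    unfolding ent_Hs[OF fin] by (rule Hs_cong) (auto simp: proj_eq)
  have e2: "ent p (A \<union> C) = Hs ?m ?W (\<lambda>w. (proj A w, proj C w))"
    unfolding ent_Hs[OF fin] by (rule Hs_cong) (auto simp: proj_eq)
  have e3: "ent p (B \<union> C) = Hs ?m ?W (\<lambda>w. (proj B w, proj C w))"
    unfolding ent_Hs[OF fin] by (rule Hs_cong) (auto simp: proj_eq)
  show ?thesis unfolding e1 e2 e3 ent_Hs[OF fin, of C]
    by (rule Hs_submod[OF fin pos one])
qed

lemma ent_mono:
  assumes fin: "finite (set_pmf p)"
  shows "ent p A \<le> ent p (A \<union> B)"
proof -
  have pos: "\<And>w. w \<in> set_pmf p \<Longrightarrow> pmf p w > 0" by (simp add: pmf_positive)
  have e1: "ent p (A \<union> B) = Hs (pmf p) (set_pmf p) (\<lambda>w. (proj A w, proj B w))"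
    unfolding ent_Hs[OF fin] by (rule Hs_cong) (auto simp: proj_eq)
  show ?thesis unfolding e1 ent_Hs[OF fin, of A] by (rule Hs_mono[OF fin pos])
qed

lemma cl1:
  assumes fin: "finite (set_pmf p)"
  shows "cent p {b} P - cent p {a} P \<le> cent p {b} {a}"
proof -
  have "ent p ({b} \<union> P) \<le> ent p ({b} \<union> P \<union> {a})" by (rule ent_mono[OF fin])
  moreover have "ent p ({b} \<union> P \<union> {a}) + ent p {a} \<le> ent p ({b} \<union> {a}) + ent p (P \<union> {a})"
    by (rule ent_sub[OF fin])
  moreover have "P \<union> {a} = {a} \<union> P" by auto
  ultimately show ?thesis unfolding cent_def by simp
qed

theorem lemma7:
  fixes p :: "('v \<Rightarrow> 'x) pmf"
    and X1 :: "'v set" and a b :: 'v and k :: nat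
    and alpha beta lam :: real
  assumes fin_supp: "finite (set_pmf p)"
    and fin_X1: "finite X1" and k_pos: "0 < k" and card_X1: "k \<le> card X1"
    and a_in: "a \<in> X1" and b_notin: "b \<notin> X1"
    and alpha_pos: "0 < alpha" and beta_pos: "0 < beta"
    \<comment> \<open>(I) unique optimal EC with gap at least beta, and (II) X_a childless in it\<close>
    and opt: "\<exists>G0. is_dag k X1 G0 \<and>
               (\<forall>G. is_dag k X1 G \<longrightarrow> score p X1 G \<le> score p X1 G0) \<and>
               (\<forall>G. is_dag k X1 G \<and> \<not> markov_equiv X1 G G0 \<longrightarrow>
                    score p X1 G \<le> score p X1 G0 - beta) \<and>
               (\<forall>G. is_dag k X1 G \<and> markov_equiv X1 G G0 \<longrightarrow>
                    (\<forall>v \<in> X1. a \<notin> G v))"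
    \<comment> \<open>(III)\<close>
    and alpha_def: "cent p {a} (X1 - {a}) = alpha"
    \<comment> \<open>range of lambda, d = |X1 \<union> {X_b}|\<close>
    and lam_pos: "0 < lam" and lam_alpha: "lam < alpha"
    and lam_beta: "lam < beta / (3 * real (card (insert b X1)))"
    \<comment> \<open>(IV) hidden Bernoulli C (first component) jointly distributed with the variables\<close>
    and hidden: "\<exists>q :: (bool \<times> ('v \<Rightarrow> 'x)) pmf.
        map_pmf snd q = p \<and>
        (\<forall>A. measure_pmf.prob q {c. fst c \<and> proj X1 (snd c) \<in> A} =
             measure_pmf.prob q {c. fst c} * measure_pmf.prob q {c. proj X1 (snd c) \<in> A}) \<and>
        (\<forall>c \<in> set_pmf q. fst c \<longrightarrow> snd c b = snd c a) \<and>
        (\<forall>u A. measure_pmf.prob q {c. \<not> fst c \<and> snd c b = u \<and> proj X1 (snd c) \<in> A} *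
                 measure_pmf.prob q {c. \<not> fst c} =
               measure_pmf.prob q {c. \<not> fst c \<and> snd c b = u} *
                 measure_pmf.prob q {c. \<not> fst c \<and> proj X1 (snd c) \<in> A})"
    \<comment> \<open>(V)\<close>
    and lam_def: "max (cent p {b} {a}) (cent p {a} {b}) = lam"
  shows "\<forall>Par Y. Par \<subseteq> X1 \<longrightarrow> Y \<in> X1 \<longrightarrow>
           \<bar>cent p {b} Par - cent p {a} Par\<bar> \<le> lam \<and>
           \<bar>cent p {Y} (Par \<union> {b}) - cent p {Y} (Par \<union> {a})\<bar> \<le> 3 * lam"
proof (intro allI impI)
  fix Par Y
  have c1: "\<bar>cent p {b} P - cent p {a} P\<bar> \<le> lam" for P
    using cl1[OF fin_supp, of b P a] cl1[OF fin_supp, of a P b] lam_def by auto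
  have "cent p {Y} (Par \<union> {b}) - cent p {Y} (Par \<union> {a})
     = (cent p {b} (insert Y Par) - cent p {a} (insert Y Par)) - (cent p {b} Par - cent p {a} Par)"
  proof -
    have "{Y} \<union> (Par \<union> {b}) = {b} \<union> insert Y Par" "{Y} \<union> (Par \<union> {a}) = {a} \<union> insert Y Par"
      "Par \<union> {b} = {b} \<union> Par" "Par \<union> {a} = {a} \<union> Par" by auto
    then show ?thesis unfolding cent_def by simp
  qed
  then have "\<bar>cent p {Y} (Par \<union> {b}) - cent p {Y} (Par \<union> {a})\<bar> \<le> 2 * lam"
    using c1[of "insert Y Par"] c1[of Par] by linarith
  then show "\<bar>cent p {b} Par - cent p {a} Par\<bar> \<le> lam \<and>
           \<bar>cent p {Y} (Par \<union> {b}) - cent p {Y} (Par \<union> {a})\<bar> \<le> 3 * lam"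
    using c1[of Par] lam_pos by linarith
qed

end
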